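(* Let $n\ge1$ and $d\ge2$ be integers. Let $T$ be any rooted tree that contains, as a topological minor, every rooted tree with $n$ leaves and no degree-1 nodes. Then the number of nodes of $T$ of degree at least $d$ is at least $$\sum_{s\ge2,\ (s-1)(d-1)+1\le n} u\big(\lfloor n/((s-1)(d-1)+1)\rfloor\big).$$ Here $u(m)$ denotes the minimum number of leaves of a rooted tree that contains, as a topological minor, every rooted tree with $m$ leaves and no degree-1 nodes.
   Context: Trees are rooted and unordered, with edges directed from parent to child. The degree of a node is its number of children; a degree-1 node has exactly one child. $T'$ is a topological minor of $T$ if there is an injective map $f$ from the nodes of $T'$ to the nodes of $T$ with $f(\mathsf{NCA}(u,v))=\mathsf{NCA}(f(u),f(v))$ for all $u,v$. Equivalently, $T$ contains a subdivision of $T'$ as a subgraph. $\mathsf{NCA}$ denotes the nearest common ancestor. *)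

theory Defs
  imports Main
begin

definition rooted_tree :: "nat set \<Rightarrow> (nat \<times> nat) set \<Rightarrow> nat \<Rightarrow> bool" where
  "rooted_tree V E r \<longleftrightarrow>
     finite V \<and> r \<in> V \<and> E \<subseteq> V \<times> V \<and>
     (\<nexists>p. (p, r) \<in> E) \<and>
     (\<forall>v\<in>V - {r}. \<exists>!p. (p, v) \<in> E) \<and>
     (\<forall>v\<in>V. (r, v) \<in> E\<^sup>*)"

definition children :: "(nat \<times> nat) set \<Rightarrow> nat \<Rightarrow> nat set" where
  "children E v = {w. (v, w) \<in> E}"

definition degree :: "(nat \<times> nat) set \<Rightarrow> nat \<Rightarrow> nat" where
  "degree E v = card (children E v)"

definition leaves :: "nat set \<Rightarrow> (nat \<times> nat) set \<Rightarrow> nat set" where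
  "leaves V E = {v \<in> V. children E v = {}}"

definition is_nca :: "(nat \<times> nat) set \<Rightarrow> nat \<Rightarrow> nat \<Rightarrow> nat \<Rightarrow> bool" where
  "is_nca E u v w \<longleftrightarrow> (w, u) \<in> E\<^sup>* \<and> (w, v) \<in> E\<^sup>* \<and>
     (\<forall>w'. (w', u) \<in> E\<^sup>* \<and> (w', v) \<in> E\<^sup>* \<longrightarrow> (w', w) \<in> E\<^sup>*)"

definition nca :: "(nat \<times> nat) set \<Rightarrow> nat \<Rightarrow> nat \<Rightarrow> nat" where
  "nca E u v = (THE w. is_nca E u v w)"

definition top_minor :: "nat set \<Rightarrow> (nat \<times> nat) set \<Rightarrow> nat set \<Rightarrow> (nat \<times> nat) set \<Rightarrow> bool" where
  "top_minor V' E' V E \<longleftrightarrow>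
     (\<exists>f. inj_on f V' \<and> f ` V' \<subseteq> V \<and>
          (\<forall>u\<in>V'. \<forall>v\<in>V'. f (nca E' u v) = nca E (f u) (f v)))"

definition universal :: "nat \<Rightarrow> nat set \<Rightarrow> (nat \<times> nat) set \<Rightarrow> nat \<Rightarrow> bool" where
  "universal m V E r \<longleftrightarrow> rooted_tree V E r \<and>
     (\<forall>V' E' r'. rooted_tree V' E' r' \<and> card (leaves V' E') = m \<and>
        (\<forall>v\<in>V'. degree E' v \<noteq> 1) \<longrightarrow> top_minor V' E' V E)"

definition u :: "nat \<Rightarrow> nat" where
  "u m = (LEAST k. \<exists>V E r. universal m V E r \<and> card (leaves V E) = k)"

end

theory Submission
  imports Defs
begin

lemma rt_E: "rooted_tree V E r \<Longrightarrow> E \<subseteq> V \<times> V"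
  by (simp add: rooted_tree_def)
lemma rt_fin: "rooted_tree V E r \<Longrightarrow> finite V"
  by (simp add: rooted_tree_def)
lemma rt_r: "rooted_tree V E r \<Longrightarrow> r \<in> V"
  by (simp add: rooted_tree_def)
lemma rt_noparent: "rooted_tree V E r \<Longrightarrow> (p, r) \<notin> E"
  by (simp add: rooted_tree_def)
lemma rt_reach: "rooted_tree V E r \<Longrightarrow> v \<in> V \<Longrightarrow> (r, v) \<in> E\<^sup>*"
  by (simp add: rooted_tree_def)

lemma parent_unique:
  assumes "rooted_tree V E r" "(p, v) \<in> E" "(q, v) \<in> E"
  shows "p = q"
proof -
  have "v \<in> V" using rt_E[OF assms(1)] assms(2) by auto
  moreover have "v \<noteq> r" using rt_noparent[OF assms(1)] assms(2) by auto
  ultimately have "\<exists>!p. (p, v) \<in> E" using assms(1) unfolding rooted_tree_def by auto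
  thus ?thesis using assms by auto
qed

lemma anc_in_V:
  assumes "E \<subseteq> V \<times> V" "(a, b) \<in> E\<^sup>*" "b \<in> V"
  shows "a \<in> V"
  using assms(2) by (rule converse_rtranclE) (use assms in auto)

lemma desc_in_V:
  assumes "E \<subseteq> V \<times> V" "(a, b) \<in> E\<^sup>*" "a \<in> V"
  shows "b \<in> V"
  using assms(2) by (rule rtranclE) (use assms in auto)

lemma acyclic_rt:
  assumes "rooted_tree V E r"
  shows "(v, v) \<notin> E\<^sup>+"
proof
  assume vv: "(v, v) \<in> E\<^sup>+"
  then obtain y where "(v, y) \<in> E" using tranclD[OF vv] by blast
  hence "v \<in> V" using rt_E[OF assms] by auto
  hence rv: "(r, v) \<in> E\<^sup>*" using rt_reach[OF assms] by auto
  have "(r, w) \<in> E\<^sup>* \<Longrightarrow> (w, w) \<notin> E\<^sup>+" for w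
  proof (induction rule: rtrancl_induct)
    case base
    show ?case
    proof
      assume "(r, r) \<in> E\<^sup>+"
      then obtain y where "(y, r) \<in> E" using tranclD2 by metis
      thus False using rt_noparent[OF assms] by auto
    qed
  next
    case (step y z)
    show ?case
    proof
      assume "(z, z) \<in> E\<^sup>+"
      then obtain p where p: "(z, p) \<in> E\<^sup>*" "(p, z) \<in> E" using tranclD2 by metis
      have "p = y" using parent_unique[OF assms p(2) step(2)] .
      hence "(y, y) \<in> E\<^sup>+" using step(2) p(1) by (meson rtrancl_into_trancl2)
      thus False using step(3) by auto
    qed
  qed
  thus False using rv vv by auto
qed

lemma antisym_rt:
  assumes "rooted_tree V E r" "(a, b) \<in> E\<^sup>*" "(b, a) \<in> E\<^sup>*"
  shows "a = b"
proof (rule ccontr)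
  assume "a \<noteq> b"
  hence "(a, b) \<in> E\<^sup>+" using assms(2) by (meson rtranclD)
  hence "(a, a) \<in> E\<^sup>+" using assms(3) by (meson trancl_rtrancl_trancl)
  thus False using acyclic_rt[OF assms(1)] by auto
qed

lemma anc_linear:
  assumes "rooted_tree V E r" "(a, t) \<in> E\<^sup>*" "(b, t) \<in> E\<^sup>*"
  shows "(a, b) \<in> E\<^sup>* \<or> (b, a) \<in> E\<^sup>*"
  using assms(2,3)
proof (induction arbitrary: b rule: rtrancl_induct)
  case base
  then show ?case by auto
next
  case (step y z)
  from step.prems show ?case
  proof (rule rtranclE)
    assume "b = z" thus ?thesis using step.hyps by auto
  next
    fix p assume "(b, p) \<in> E\<^sup>*" "(p, z) \<in> E"
    moreover have "p = y" using parent_unique[OF assms(1) \<open>(p, z) \<in> E\<close> step.hyps(2)] .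
    ultimately show ?thesis using step.IH by auto
  qed
qed

lemma anc_parent:
  assumes "rooted_tree V E r" "(w', c) \<in> E\<^sup>*" "(w, c) \<in> E"
  shows "w' = c \<or> (w', w) \<in> E\<^sup>*"
  using assms(2)
proof (rule rtranclE)
  fix p assume "(w', p) \<in> E\<^sup>*" "(p, c) \<in> E"
  thus ?thesis using parent_unique[OF assms(1) \<open>(p, c) \<in> E\<close> assms(3)] by auto
qed auto

lemma nca_unique:
  assumes "rooted_tree V E r" "is_nca E a b w"
  shows "nca E a b = w"
  unfolding nca_def
proof (rule the_equality)
  show "is_nca E a b w" by fact
  fix w' assume "is_nca E a b w'"
  hence "(w', w) \<in> E\<^sup>*" "(w, w') \<in> E\<^sup>*" using assms(2) unfolding is_nca_def by auto
  thus "w' = w" using antisym_rt[OF assms(1)] by auto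
qed

lemma nca_anc:
  assumes "rooted_tree V E r" "(x, y) \<in> E\<^sup>*"
  shows "nca E x y = x"
  using assms by (intro nca_unique) (auto simp: is_nca_def)

lemma nca_exists:
  assumes "rooted_tree V E r" "t \<in> V" "v \<in> V"
  shows "is_nca E t v (nca E t v)"
proof -
  have EV: "E \<subseteq> V \<times> V" and fin: "finite V" using assms(1) by (auto simp: rooted_tree_def)
  define C where "C = {w. (w, t) \<in> E\<^sup>* \<and> (w, v) \<in> E\<^sup>*}"
  define h where "h w = card {a. (a, w) \<in> E\<^sup>*}" for w
  have CV: "C \<subseteq> V" using anc_in_V[OF EV] assms(2) unfolding C_def by auto
  have "r \<in> C" using rt_reach[OF assms(1)] assms unfolding C_def by auto
  hence Cne: "C \<noteq> {}" by auto
  have fC: "finite C" using CV fin finite_subset by auto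
  have "Max (h ` C) \<in> h ` C" using fC Cne by auto
  then obtain w where wC: "w \<in> C" and wmax: "h w = Max (h ` C)" by (rule imageE) auto
  have "is_nca E t v w"
    unfolding is_nca_def
  proof (intro conjI allI impI)
    show "(w, t) \<in> E\<^sup>*" "(w, v) \<in> E\<^sup>*" using wC unfolding C_def by auto
    fix w' assume w': "(w', t) \<in> E\<^sup>* \<and> (w', v) \<in> E\<^sup>*"
    hence w'C: "w' \<in> C" unfolding C_def by auto
    from anc_linear[OF assms(1), of w' t w] w' wC
    have "(w', w) \<in> E\<^sup>* \<or> (w, w') \<in> E\<^sup>*" unfolding C_def by auto
    thus "(w', w) \<in> E\<^sup>*"
    proof
      assume ww': "(w, w') \<in> E\<^sup>*"
      have sub: "{a. (a, w) \<in> E\<^sup>*} \<subseteq> {a. (a, w') \<in> E\<^sup>*}" using ww' by auto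
      have w'V: "w' \<in> V" using w'C CV by auto
      have fin': "finite {a. (a, w') \<in> E\<^sup>*}"
        using anc_in_V[OF EV _ w'V] fin by (metis (no_types, lifting) finite_subset mem_Collect_eq subsetI)
      have "h w' \<le> h w" using wmax w'C fC by auto
      hence "card {a. (a, w) \<in> E\<^sup>*} = card {a. (a, w') \<in> E\<^sup>*}"
        using card_mono[OF fin' sub] unfolding h_def by linarith
      hence "{a. (a, w) \<in> E\<^sup>*} = {a. (a, w') \<in> E\<^sup>*}"
        using card_subset_eq[OF fin' sub] by simp
      hence "w' \<in> {a. (a, w) \<in> E\<^sup>*}" by simp
      thus ?thesis by simp
    qed
  qed
  thus ?thesis using nca_unique[OF assms(1)] by auto
qed

lemma leaf_below:
  assumes "rooted_tree V E r" "x \<in> V"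
  shows "\<exists>l\<in>leaves V E. (x, l) \<in> E\<^sup>*"
proof -
  have EV: "E \<subseteq> V \<times> V" and fin: "finite V" using assms(1) by (auto simp: rooted_tree_def)
  define D where "D = {y. (x, y) \<in> E\<^sup>*}"
  define h where "h w = card {a. (a, w) \<in> E\<^sup>*}" for w
  have DV: "D \<subseteq> V" using desc_in_V[OF EV] assms(2) unfolding D_def by auto
  have Dne: "D \<noteq> {}" unfolding D_def by auto
  have fD: "finite D" using DV fin finite_subset by auto
  have "Max (h ` D) \<in> h ` D" using fD Dne by auto
  then obtain y where yD: "y \<in> D" and ymax: "h y = Max (h ` D)" by (rule imageE) auto
  have "children E y = {}"
  proof (rule ccontr)
    assume "children E y \<noteq> {}"
    then obtain c where yc: "(y, c) \<in> E" unfolding children_def by auto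
    hence cD: "c \<in> D" using yD unfolding D_def by auto
    have cV: "c \<in> V" using cD DV by auto
    have sub: "{a. (a, y) \<in> E\<^sup>*} \<subseteq> {a. (a, c) \<in> E\<^sup>*}" using yc by auto
    have "c \<notin> {a. (a, y) \<in> E\<^sup>*}"
    proof
      assume "c \<in> {a. (a, y) \<in> E\<^sup>*}"
      hence "(y, y) \<in> E\<^sup>+" using yc by (simp add: rtrancl_into_trancl2)
      thus False using acyclic_rt[OF assms(1)] by auto
    qed
    hence ps: "{a. (a, y) \<in> E\<^sup>*} \<subset> {a. (a, c) \<in> E\<^sup>*}" using sub by auto
    have fin': "finite {a. (a, c) \<in> E\<^sup>*}"
      using anc_in_V[OF EV _ cV] fin by (metis (no_types, lifting) finite_subset mem_Collect_eq subsetI)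
    have "h y < h c" using psubset_card_mono[OF fin' ps] unfolding h_def .
    moreover have "h c \<le> h y" using ymax cD fD by auto
    ultimately show False by auto
  qed
  thus ?thesis using yD DV unfolding D_def leaves_def by auto
qed

definition tree_ext :: "nat set \<Rightarrow> (nat \<times> nat) set \<Rightarrow> nat set \<Rightarrow> (nat \<times> nat) set \<Rightarrow> bool" where
  "tree_ext V E V2 E2 \<longleftrightarrow> V \<subseteq> V2 \<and> E \<subseteq> E2 \<and> (\<forall>a b. (a, b) \<in> E2 \<longrightarrow> b \<in> V \<longrightarrow> (a, b) \<in> E)"

lemma tree_ext_trans: "tree_ext V1 E1 V2 E2 \<Longrightarrow> tree_ext V2 E2 V3 E3 \<Longrightarrow> E1 \<subseteq> V1 \<times> V1 \<Longrightarrow> tree_ext V1 E1 V3 E3"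
  unfolding tree_ext_def by blast

lemma ext_rtrancl:
  assumes "tree_ext V E V2 E2" "E \<subseteq> V \<times> V" "(a, b) \<in> E2\<^sup>*" "b \<in> V"
  shows "(a, b) \<in> E\<^sup>*"
proof -
  have "b \<in> V \<longrightarrow> (a, b) \<in> E\<^sup>*" using assms(3)
  proof (induction rule: rtrancl_induct)
    case (step y z)
    show ?case
    proof
      assume "z \<in> V"
      hence "(y, z) \<in> E" using assms(1) step(2) unfolding tree_ext_def by auto
      hence "y \<in> V" using assms(2) by auto
      thus "(a, z) \<in> E\<^sup>*" using step \<open>(y, z) \<in> E\<close> by auto
    qed
  qed auto
  thus ?thesis using assms(4) by auto
qed

lemma ext_rtrancl_iff:
  assumes "tree_ext V E V2 E2" "E \<subseteq> V \<times> V" "b \<in> V"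
  shows "(a, b) \<in> E2\<^sup>* \<longleftrightarrow> (a, b) \<in> E\<^sup>*"
proof
  show "(a, b) \<in> E\<^sup>* \<Longrightarrow> (a, b) \<in> E2\<^sup>*"
    using assms(1) rtrancl_mono unfolding tree_ext_def by blast
qed (use ext_rtrancl[OF assms(1,2) _ assms(3)] in auto)

lemma ext_nca:
  assumes "tree_ext V E V2 E2" "E \<subseteq> V \<times> V" "x \<in> V" "y \<in> V"
  shows "nca E2 x y = nca E x y"
proof -
  have ix: "(w', x) \<in> E2\<^sup>* \<longleftrightarrow> (w', x) \<in> E\<^sup>*" and iy: "(w', y) \<in> E2\<^sup>* \<longleftrightarrow> (w', y) \<in> E\<^sup>*" for w'
    using ext_rtrancl_iff[OF assms(1,2)] assms(3,4) by auto
  have iw: "(w', w) \<in> E2\<^sup>* \<longleftrightarrow> (w', w) \<in> E\<^sup>*" if "(w, x) \<in> E\<^sup>*" for w' w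
  proof -
    have "w \<in> V" using anc_in_V[OF assms(2) that assms(3)] .
    thus ?thesis using ext_rtrancl_iff[OF assms(1,2)] by auto
  qed
  have "is_nca E2 x y w \<longleftrightarrow> is_nca E x y w" for w
  proof
    assume h: "is_nca E2 x y w"
    hence wx: "(w, x) \<in> E\<^sup>*" using ix unfolding is_nca_def by auto
    show "is_nca E x y w" unfolding is_nca_def
    proof (intro conjI allI impI)
      show "(w, x) \<in> E\<^sup>*" by fact
      show "(w, y) \<in> E\<^sup>*" using h iy unfolding is_nca_def by auto
      fix w' assume "(w', x) \<in> E\<^sup>* \<and> (w', y) \<in> E\<^sup>*"
      hence "(w', w) \<in> E2\<^sup>*" using h ix iy unfolding is_nca_def by auto
      thus "(w', w) \<in> E\<^sup>*" using iw[OF wx] by auto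
    qed
  next
    assume h: "is_nca E x y w"
    hence wx: "(w, x) \<in> E\<^sup>*" unfolding is_nca_def by auto
    show "is_nca E2 x y w" unfolding is_nca_def
    proof (intro conjI allI impI)
      show "(w, x) \<in> E2\<^sup>*" using wx ix by auto
      show "(w, y) \<in> E2\<^sup>*" using h iy unfolding is_nca_def by auto
      fix w' assume "(w', x) \<in> E2\<^sup>* \<and> (w', y) \<in> E2\<^sup>*"
      hence "(w', w) \<in> E\<^sup>*" using h ix iy unfolding is_nca_def by auto
      thus "(w', w) \<in> E2\<^sup>*" using iw[OF wx] by auto
    qed
  qed
  hence "is_nca E2 x y = is_nca E x y" by (rule ext)
  thus ?thesis unfolding nca_def by simp
qed

lemma ext_children: "tree_ext V E V2 E2 \<Longrightarrow> children E v \<subseteq> children E2 v"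
  unfolding tree_ext_def children_def by auto

lemma children_sub: "rooted_tree V E r \<Longrightarrow> children E v \<subseteq> V"
  unfolding children_def using rt_E by fastforce

lemma children_fin: "rooted_tree V E r \<Longrightarrow> finite (children E v)"
  using children_sub rt_fin finite_subset by metis

lemma ext_degree: "tree_ext V E V2 E2 \<Longrightarrow> rooted_tree V2 E2 r2 \<Longrightarrow> degree E v \<le> degree E2 v"
  unfolding degree_def by (rule card_mono[OF children_fin ext_children])

lemma star:
  assumes "rooted_tree V E r" "x \<in> V"
  shows "\<exists>K. finite K \<and> card K = k \<and> K \<inter> V = {} \<and>
     rooted_tree (V \<union> K) (E \<union> {x} \<times> K) r \<and> tree_ext V E (V \<union> K) (E \<union> {x} \<times> K) \<and>
     (\<forall>v. children (E \<union> {x} \<times> K) v = (if v = x then children E v \<union> K else children E v))"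
proof -
  have fin: "finite V" and EV: "E \<subseteq> V \<times> V" using assms(1) by (auto simp: rooted_tree_def)
  have "infinite (UNIV - V)" using fin by (simp add: Diff_infinite_finite)
  then obtain K where K: "K \<subseteq> UNIV - V" "finite K" "card K = k"
    using infinite_arbitrarily_large by blast
  have KV: "K \<inter> V = {}" using K by auto
  let ?E = "E \<union> {x} \<times> K"
  have rt: "rooted_tree (V \<union> K) ?E r"
    unfolding rooted_tree_def
  proof (intro conjI ballI)
    show "finite (V \<union> K)" using fin K by auto
    show "r \<in> V \<union> K" using rt_r[OF assms(1)] by auto
    show "?E \<subseteq> (V \<union> K) \<times> (V \<union> K)" using EV assms(2) by auto
    show "\<nexists>p. (p, r) \<in> ?E" using rt_noparent[OF assms(1)] rt_r[OF assms(1)] KV by auto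
  next
    fix v assume v: "v \<in> V \<union> K - {r}"
    show "\<exists>!p. (p, v) \<in> ?E"
    proof (cases "v \<in> V")
      case True
      hence "\<exists>!p. (p, v) \<in> E" using v assms(1) unfolding rooted_tree_def by auto
      moreover have "(p, v) \<in> ?E \<longleftrightarrow> (p, v) \<in> E" for p using True KV by auto
      ultimately show ?thesis by simp
    next
      case False
      hence "v \<in> K" using v by auto
      moreover have "(p, v) \<notin> E" for p using False EV by auto
      ultimately show ?thesis by auto
    qed
  next
    fix v assume v: "v \<in> V \<union> K"
    have sub: "E\<^sup>* \<subseteq> ?E\<^sup>*" by (simp add: rtrancl_mono)
    show "(r, v) \<in> ?E\<^sup>*"
    proof (cases "v \<in> V")
      case True thus ?thesis using rt_reach[OF assms(1)] sub by auto
    next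
      case False
      hence "(x, v) \<in> ?E" using v by auto
      moreover have "(r, x) \<in> ?E\<^sup>*" using rt_reach[OF assms(1) assms(2)] sub by auto
      ultimately show ?thesis by (meson rtrancl_into_rtrancl)
    qed
  qed
  have "tree_ext V E (V \<union> K) ?E" unfolding tree_ext_def using KV by auto
  moreover have "\<forall>v. children ?E v = (if v = x then children E v \<union> K else children E v)"
    unfolding children_def by auto
  ultimately show ?thesis using K KV rt by blast
qed

definition chainP :: "(nat \<times> nat) set \<Rightarrow> nat \<Rightarrow> nat \<Rightarrow> nat \<Rightarrow> bool" where
  "chainP E d j v \<longleftrightarrow> (\<exists>cs. length cs = j \<and> (\<forall>c\<in>set cs. d \<le> degree E c) \<and>
      sorted_wrt (\<lambda>a b. (a, b) \<in> E\<^sup>+) cs \<and> (cs \<noteq> [] \<longrightarrow> (v, hd cs) \<in> E\<^sup>*))"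

lemma chainP_ext:
  assumes "tree_ext V E V2 E2" "rooted_tree V2 E2 r2" "chainP E d j v"
  shows "chainP E2 d j v"
proof -
  obtain cs where cs: "length cs = j" "\<forall>c\<in>set cs. d \<le> degree E c"
      "sorted_wrt (\<lambda>a b. (a, b) \<in> E\<^sup>+) cs" "cs \<noteq> [] \<longrightarrow> (v, hd cs) \<in> E\<^sup>*"
    using assms(3) unfolding chainP_def by blast
  have EE: "E \<subseteq> E2" using assms(1) unfolding tree_ext_def by auto
  have "\<forall>c\<in>set cs. d \<le> degree E2 c" using cs(2) ext_degree[OF assms(1,2)] le_trans by blast
  moreover have "sorted_wrt (\<lambda>a b. (a, b) \<in> E2\<^sup>+) cs"
    by (rule sorted_wrt_mono_rel[OF _ cs(3)]) (use trancl_mono[OF _ EE] in auto)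
  moreover have "cs \<noteq> [] \<longrightarrow> (v, hd cs) \<in> E2\<^sup>*" using cs(4) rtrancl_mono[OF EE] by auto
  ultimately show ?thesis using cs(1) unfolding chainP_def by blast
qed

lemma chainP_nonleaf:
  assumes "chainP E d j v" "j \<ge> 1" "d \<ge> 1" "finite (children E v)"
  shows "children E v \<noteq> {}"
proof -
  obtain cs where cs: "length cs = j" "\<forall>c\<in>set cs. d \<le> degree E c"
      "cs \<noteq> [] \<longrightarrow> (v, hd cs) \<in> E\<^sup>*"
    using assms(1) unfolding chainP_def by blast
  have ne: "cs \<noteq> []" using cs(1) assms(2) by auto
  hence "d \<le> degree E (hd cs)" using cs(2) by auto
  hence dh: "children E (hd cs) \<noteq> {}" using assms(3) unfolding degree_def by auto
  from cs(3) ne have "(v, hd cs) \<in> E\<^sup>*" by auto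
  thus ?thesis
  proof (rule converse_rtranclE)
    assume "v = hd cs" thus ?thesis using dh by simp
  next
    fix y assume "(v, y) \<in> E" thus ?thesis unfolding children_def by auto
  qed
qed

lemma children_out: "rooted_tree V E r \<Longrightarrow> v \<notin> V \<Longrightarrow> children E v = {}"
  unfolding children_def using rt_E by fastforce

lemma leaves_sub: "leaves V E \<subseteq> V" unfolding leaves_def by auto

lemma leaves_fin: "rooted_tree V E r \<Longrightarrow> finite (leaves V E)"
  using leaves_sub rt_fin finite_subset by metis

lemma star_leaf:
  assumes "rooted_tree V E r" "x \<in> leaves V E" "d \<ge> 2"
  shows "\<exists>K E1. K \<inter> V = {} \<and> card K = d \<and> finite K \<and> rooted_tree (V \<union> K) E1 r \<and>
     tree_ext V E (V \<union> K) E1 \<and> leaves (V \<union> K) E1 = (leaves V E - {x}) \<union> K \<and>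
     card (leaves (V \<union> K) E1) = card (leaves V E) + (d - 1) \<and> degree E1 x = d \<and>
     (\<forall>v\<in>K. degree E1 v = 0) \<and> (\<forall>v\<in>V - {x}. children E1 v = children E v) \<and> children E1 x = K"
proof -
  have xV: "x \<in> V" and cx: "children E x = {}" using assms(2) unfolding leaves_def by auto
  obtain K where K: "finite K" "card K = d" "K \<inter> V = {}"
     "rooted_tree (V \<union> K) (E \<union> {x} \<times> K) r" "tree_ext V E (V \<union> K) (E \<union> {x} \<times> K)"
     and ch: "\<forall>v. children (E \<union> {x} \<times> K) v = (if v = x then children E v \<union> K else children E v)"
    using star[OF assms(1) xV, of d] by blast
  let ?E = "E \<union> {x} \<times> K"
  have Kne: "K \<noteq> {}" using K(2) assms(3) by auto
  have cK: "v \<in> K \<Longrightarrow> children ?E v = {}" for v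
    using ch children_out[OF assms(1), of v] K(3) xV by auto
  have lv: "leaves (V \<union> K) ?E = (leaves V E - {x}) \<union> K"
  proof -
    have xK: "x \<notin> K" using K(3) xV by auto
    have cEK: "v \<in> K \<Longrightarrow> children E v = {}" for v using children_out[OF assms(1)] K(3) by auto
    show ?thesis unfolding leaves_def using ch cEK cx Kne xK by auto
  qed
  have fl: "finite (leaves V E)" using leaves_fin[OF assms(1)] .
  have disj: "(leaves V E - {x}) \<inter> K = {}" using K(3) leaves_sub by auto
  have "card (leaves (V \<union> K) ?E) = card (leaves V E - {x}) + card K"
    unfolding lv using card_Un_disjoint[OF _ K(1) disj] fl by auto
  also have "\<dots> = card (leaves V E) + (d - 1)"
    using card_Diff_singleton[OF assms(2)] K(2) assms(3) card_gt_0_iff[of "leaves V E"] fl assms(2)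
    by auto
  finally have cl: "card (leaves (V \<union> K) ?E) = card (leaves V E) + (d - 1)" .
  have "degree ?E x = d" unfolding degree_def using ch cx K(2) by simp
  moreover have "\<forall>v\<in>K. degree ?E v = 0" unfolding degree_def using cK by simp
  moreover have "\<forall>v\<in>V - {x}. children ?E v = children E v" using ch by auto
  moreover have "children ?E x = K" using ch cx by simp
  ultimately show ?thesis using K lv cl by blast
qed

lemma chain_grow:
  assumes "rooted_tree V E r" "x \<in> leaves V E" "d \<ge> 2"
  shows "\<exists>V2 E2. rooted_tree V2 E2 r \<and> tree_ext V E V2 E2 \<and>
     card (leaves V2 E2) = card (leaves V E) + Suc j * (d - 1) \<and>
     (\<forall>v\<in>V2 - (V - {x}). degree E2 v \<noteq> 1) \<and> (\<forall>v\<in>V - {x}. children E2 v = children E v) \<and>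
     chainP E2 d (Suc j) x"
  using assms
proof (induction j arbitrary: V E x)
  case 0
  obtain K E1 where S: "K \<inter> V = {}" "card K = d" "finite K" "rooted_tree (V \<union> K) E1 r"
     "tree_ext V E (V \<union> K) E1" "card (leaves (V \<union> K) E1) = card (leaves V E) + (d - 1)"
     "degree E1 x = d" "\<forall>v\<in>K. degree E1 v = 0" "\<forall>v\<in>V - {x}. children E1 v = children E v"
    using star_leaf[OF "0.prems"] by blast
  have "chainP E1 d (Suc 0) x"
    unfolding chainP_def by (rule exI[of _ "[x]"]) (use S(7) in auto)
  moreover have "\<forall>v\<in>(V \<union> K) - (V - {x}). degree E1 v \<noteq> 1"
    using S(7,8) "0.prems"(3) by auto
  ultimately show ?case using S by auto
next
  case (Suc j)
  obtain K E1 where S: "K \<inter> V = {}" "card K = d" "finite K" "rooted_tree (V \<union> K) E1 r"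
     "tree_ext V E (V \<union> K) E1" "leaves (V \<union> K) E1 = (leaves V E - {x}) \<union> K"
     "card (leaves (V \<union> K) E1) = card (leaves V E) + (d - 1)"
     "degree E1 x = d" "\<forall>v\<in>K. degree E1 v = 0" "\<forall>v\<in>V - {x}. children E1 v = children E v" "children E1 x = K"
    using star_leaf[OF Suc.prems] by blast
  have xV: "x \<in> V" using Suc.prems(2) leaves_sub by auto
  obtain c where cK: "c \<in> K" using S(2) Suc.prems(3) by (metis card.empty ex_in_conv not_numeral_le_zero)
  have cl: "c \<in> leaves (V \<union> K) E1" using S(6) cK by auto
  obtain V2 E2 where T: "rooted_tree V2 E2 r" "tree_ext (V \<union> K) E1 V2 E2"
     "card (leaves V2 E2) = card (leaves (V \<union> K) E1) + Suc j * (d - 1)"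
     "\<forall>v\<in>V2 - ((V \<union> K) - {c}). degree E2 v \<noteq> 1"
     "\<forall>v\<in>(V \<union> K) - {c}. children E2 v = children E1 v"
     "chainP E2 d (Suc j) c"
    using Suc.IH[OF S(4) cl Suc.prems(3)] by blast
  have cx: "c \<noteq> x" using cK xV S(1) by auto
  have EV: "E \<subseteq> V \<times> V" using rt_E[OF Suc.prems(1)] .
  have ext: "tree_ext V E V2 E2" using tree_ext_trans[OF S(5) T(2) EV] .
  have card: "card (leaves V2 E2) = card (leaves V E) + Suc (Suc j) * (d - 1)"
    using T(3) S(7) by simp
  have dx: "degree E2 x = d" using T(5) S(8) cx xV unfolding degree_def by auto
  have nd: "\<forall>v\<in>V2 - (V - {x}). degree E2 v \<noteq> 1"
  proof
    fix v assume v: "v \<in> V2 - (V - {x})"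
    show "degree E2 v \<noteq> 1"
    proof (cases "v \<in> (V \<union> K) - {c}")
      case True
      hence "degree E2 v = degree E1 v" using T(5) unfolding degree_def by auto
      moreover have "v = x \<or> v \<in> K" using v True by auto
      ultimately show ?thesis using S(8,9) Suc.prems(3) by auto
    next
      case False thus ?thesis using T(4) v by auto
    qed
  qed
  have chs: "\<forall>v\<in>V - {x}. children E2 v = children E v" using T(5) S(10) S(1) cK by auto
  obtain cs where cs: "length cs = Suc j" "\<forall>b\<in>set cs. d \<le> degree E2 b"
      "sorted_wrt (\<lambda>a b. (a, b) \<in> E2\<^sup>+) cs" "cs \<noteq> [] \<longrightarrow> (c, hd cs) \<in> E2\<^sup>*"
    using T(6) unfolding chainP_def by blast
  have xc: "(x, c) \<in> E2"
    using S(11) cK S(5) T(2) unfolding children_def tree_ext_def by auto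
  have ne: "cs \<noteq> []" using cs(1) by auto
  have hb: "\<forall>b\<in>set cs. (hd cs, b) \<in> E2\<^sup>*"
  proof (cases cs)
    case (Cons a rest)
    thus ?thesis using cs(3) by auto
  qed (use ne in auto)
  have "chainP E2 d (Suc (Suc j)) x"
    unfolding chainP_def
  proof (rule exI[of _ "x # cs"], intro conjI)
    show "length (x # cs) = Suc (Suc j)" using cs(1) by simp
    show "\<forall>c\<in>set (x # cs). d \<le> degree E2 c" using cs(2) dx by auto
    have "\<forall>b\<in>set cs. (x, b) \<in> E2\<^sup>+"
    proof
      fix b assume "b \<in> set cs"
      hence "(c, b) \<in> E2\<^sup>*" using hb cs(4) ne by (meson rtrancl_trans)
      thus "(x, b) \<in> E2\<^sup>+" using xc by (meson rtrancl_into_trancl2)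
    qed
    thus "sorted_wrt (\<lambda>a b. (a, b) \<in> E2\<^sup>+) (x # cs)" using cs(3) by simp
  qed simp
  thus ?case using T(1) ext card nd chs by blast
qed

lemma all_grow:
  assumes "finite S" "rooted_tree V E r" "S \<subseteq> leaves V E" "d \<ge> 2"
  shows "\<exists>V2 E2. rooted_tree V2 E2 r \<and> tree_ext V E V2 E2 \<and>
     card (leaves V2 E2) = card (leaves V E) + card S * (Suc j * (d - 1)) \<and>
     (\<forall>v\<in>V2 - (V - S). degree E2 v \<noteq> 1) \<and> (\<forall>v\<in>V - S. children E2 v = children E v) \<and>
     (\<forall>x\<in>S. chainP E2 d (Suc j) x)"
  using assms(1,3)
proof (induction S rule: finite_induct)
  case empty
  have "tree_ext V E V E" unfolding tree_ext_def by auto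
  thus ?case using assms(2) by auto
next
  case (insert x F)
  obtain V1 E1 where T: "rooted_tree V1 E1 r" "tree_ext V E V1 E1"
     "card (leaves V1 E1) = card (leaves V E) + card F * (Suc j * (d - 1))"
     "\<forall>v\<in>V1 - (V - F). degree E1 v \<noteq> 1" "\<forall>v\<in>V - F. children E1 v = children E v"
     "\<forall>x\<in>F. chainP E1 d (Suc j) x"
    using insert.IH insert.prems by auto
  have xl: "x \<in> leaves V E" using insert.prems by auto
  have xV: "x \<in> V" using xl leaves_sub by auto
  have VV1: "V \<subseteq> V1" using T(2) unfolding tree_ext_def by auto
  have xl1: "x \<in> leaves V1 E1" using xl T(5) insert.hyps(2) VV1 unfolding leaves_def by auto
  obtain V2 E2 where U: "rooted_tree V2 E2 r" "tree_ext V1 E1 V2 E2"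
     "card (leaves V2 E2) = card (leaves V1 E1) + Suc j * (d - 1)"
     "\<forall>v\<in>V2 - (V1 - {x}). degree E2 v \<noteq> 1" "\<forall>v\<in>V1 - {x}. children E2 v = children E1 v"
     "chainP E2 d (Suc j) x"
    using chain_grow[OF T(1) xl1 assms(4)] by blast
  have ext: "tree_ext V E V2 E2" using tree_ext_trans[OF T(2) U(2) rt_E[OF assms(2)]] .
  have card: "card (leaves V2 E2) = card (leaves V E) + card (insert x F) * (Suc j * (d - 1))"
    using U(3) T(3) insert.hyps by simp
  have nd: "\<forall>v\<in>V2 - (V - insert x F). degree E2 v \<noteq> 1"
  proof
    fix v assume v: "v \<in> V2 - (V - insert x F)"
    show "degree E2 v \<noteq> 1"
    proof (cases "v \<in> V1 - {x}")
      case True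
      hence "degree E2 v = degree E1 v" using U(5) unfolding degree_def by auto
      moreover have "v \<in> V1 - (V - F)" using True v by auto
      ultimately show ?thesis using T(4) by auto
    next
      case False thus ?thesis using U(4) v by auto
    qed
  qed
  have ch: "\<forall>v\<in>V - insert x F. children E2 v = children E v" using U(5) T(5) VV1 by auto
  have "\<forall>y\<in>insert x F. chainP E2 d (Suc j) y"
    using U(6) T(6) chainP_ext[OF U(2) U(1)] by auto
  thus ?case using U(1) ext card nd ch by blast
qed

lemma grow_full:
  assumes "rooted_tree V E r" "\<forall>v\<in>V. degree E v \<noteq> 1" "card (leaves V E) = m" "d \<ge> 2"
    "m * (Suc j * (d - 1) + 1) \<le> n"
  shows "\<exists>V2 E2. rooted_tree V2 E2 r \<and> tree_ext V E V2 E2 \<and> card (leaves V2 E2) = n \<and>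
     (\<forall>v\<in>V2. degree E2 v \<noteq> 1) \<and> (\<forall>x\<in>leaves V E. chainP E2 d (Suc j) x)"
proof -
  let ?S = "leaves V E"
  obtain V1 E1 where T: "rooted_tree V1 E1 r" "tree_ext V E V1 E1"
     "card (leaves V1 E1) = card (leaves V E) + card ?S * (Suc j * (d - 1))"
     "\<forall>v\<in>V1 - (V - ?S). degree E1 v \<noteq> 1" "\<forall>v\<in>V - ?S. children E1 v = children E v"
     "\<forall>x\<in>?S. chainP E1 d (Suc j) x"
    using all_grow[OF leaves_fin[OF assms(1)] assms(1) subset_refl assms(4), of j] by blast
  have c1: "card (leaves V1 E1) = m * (Suc j * (d - 1) + 1)" using T(3) assms(3) by simp
  have rV: "r \<in> V" using rt_r[OF assms(1)] .
  have VV1: "V \<subseteq> V1" using T(2) unfolding tree_ext_def by auto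
  have nd1: "\<forall>v\<in>V1. degree E1 v \<noteq> 1"
  proof
    fix v assume "v \<in> V1"
    show "degree E1 v \<noteq> 1"
    proof (cases "v \<in> V - ?S")
      case True thus ?thesis using T(5) assms(2) unfolding degree_def by auto
    next
      case False thus ?thesis using T(4) \<open>v \<in> V1\<close> by auto
    qed
  qed
  have rne: "children E1 r \<noteq> {}"
  proof (cases "r \<in> ?S")
    case True thus ?thesis using chainP_nonleaf[OF _ _ _ children_fin[OF T(1)]] T(6) assms(4) by auto
  next
    case False
    hence "children E r \<noteq> {}" using rV unfolding leaves_def by auto
    thus ?thesis using ext_children[OF T(2)] by auto
  qed
  have dr: "card (children E1 r) \<ge> 2"
  proof -
    have "card (children E1 r) \<noteq> 0" using rne children_fin[OF T(1)] by auto
    moreover have "card (children E1 r) \<noteq> 1" using nd1 VV1 rV unfolding degree_def by auto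
    ultimately show ?thesis by linarith
  qed
  have rV1: "r \<in> V1" using rV VV1 by auto
  obtain K where K: "finite K" "card K = n - m * (Suc j * (d - 1) + 1)" "K \<inter> V1 = {}"
     "rooted_tree (V1 \<union> K) (E1 \<union> {r} \<times> K) r" "tree_ext V1 E1 (V1 \<union> K) (E1 \<union> {r} \<times> K)"
     and ch: "\<forall>v. children (E1 \<union> {r} \<times> K) v = (if v = r then children E1 v \<union> K else children E1 v)"
    using star[OF T(1) rV1] by blast
  let ?E = "E1 \<union> {r} \<times> K"
  have rK: "r \<notin> K" using K(3) rV1 by auto
  have cEK: "v \<in> K \<Longrightarrow> children E1 v = {}" for v using children_out[OF T(1)] K(3) by auto
  have lv: "leaves (V1 \<union> K) ?E = leaves V1 E1 \<union> K"
    unfolding leaves_def using ch cEK rne rK by auto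
  have disj: "leaves V1 E1 \<inter> K = {}" using K(3) leaves_sub by auto
  have cl: "card (leaves (V1 \<union> K) ?E) = n"
    unfolding lv using card_Un_disjoint[OF leaves_fin[OF T(1)] K(1) disj] c1 K(2) assms(5) by simp
  have nd: "\<forall>v\<in>V1 \<union> K. degree ?E v \<noteq> 1"
  proof
    fix v assume v: "v \<in> V1 \<union> K"
    show "degree ?E v \<noteq> 1"
    proof (cases "v = r")
      case True
      have "card (children E1 r) \<le> card (children ?E r)"
        using ext_children[OF K(5)] children_fin[OF K(4)] card_mono by metis
      thus ?thesis using True dr unfolding degree_def by auto
    next
      case False
      hence "degree ?E v = degree E1 v" using ch unfolding degree_def by auto
      thus ?thesis using nd1 cEK v unfolding degree_def by (cases "v \<in> K") auto
    qed
  qed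
  have ext: "tree_ext V E (V1 \<union> K) ?E" using tree_ext_trans[OF T(2) K(5) rt_E[OF assms(1)]] .
  have "\<forall>x\<in>?S. chainP ?E d (Suc j) x" using T(6) chainP_ext[OF K(5) K(4)] by auto
  thus ?thesis using K(4) ext cl nd by blast
qed

lemma exists_tree:
  assumes "m \<ge> 1"
  shows "\<exists>V E r. rooted_tree V E r \<and> card (leaves V E) = m \<and> (\<forall>v\<in>V. degree E v \<noteq> 1)"
proof -
  have rt0: "rooted_tree {0} {} 0" unfolding rooted_tree_def by auto
  have l0: "leaves {0} {} = {0}" unfolding leaves_def children_def by auto
  show ?thesis
  proof (cases "m = 1")
    case True
    thus ?thesis using rt0 l0 unfolding degree_def children_def by (intro exI[of _ "{0}"] exI[of _ "{}"] exI[of _ 0]) auto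
  next
    case False
    hence m2: "m \<ge> 2" using assms by auto
    obtain K E1 where S: "K \<inter> {0} = {}" "card K = m" "finite K" "rooted_tree ({0} \<union> K) E1 0"
     "leaves ({0} \<union> K) E1 = (leaves {0} {} - {0}) \<union> K"
     "degree E1 0 = m" "\<forall>v\<in>K. degree E1 v = 0"
      using star_leaf[OF rt0 _ m2, of 0] l0 by blast
    have "card (leaves ({0} \<union> K) E1) = m" using S(5) S(2) l0 by simp
    moreover have "\<forall>v\<in>{0} \<union> K. degree E1 v \<noteq> 1" using S(6,7) m2 by auto
    ultimately show ?thesis using S(4) by blast
  qed
qed

definition emb :: "nat set \<Rightarrow> (nat \<times> nat) set \<Rightarrow> nat set \<Rightarrow> (nat \<times> nat) set \<Rightarrow> (nat \<Rightarrow> nat) \<Rightarrow> bool" where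
  "emb V2 E2 V E f \<longleftrightarrow> inj_on f V2 \<and> f ` V2 \<subseteq> V \<and> (\<forall>x\<in>V2. \<forall>y\<in>V2. f (nca E2 x y) = nca E (f x) (f y))"

lemma emb_anc:
  assumes "rooted_tree V2 E2 r2" "rooted_tree V E r" "emb V2 E2 V E f" "x \<in> V2" "y \<in> V2" "(x, y) \<in> E2\<^sup>*"
  shows "(f x, f y) \<in> E\<^sup>*"
proof -
  have "nca E2 x y = x" using nca_anc[OF assms(1,6)] .
  hence eq: "f x = nca E (f x) (f y)" using assms(3,4,5) unfolding emb_def by metis
  have "f x \<in> V" "f y \<in> V" using assms(3,4,5) unfolding emb_def by auto
  hence "is_nca E (f x) (f y) (nca E (f x) (f y))" using nca_exists[OF assms(2)] by auto
  thus ?thesis using eq unfolding is_nca_def by metis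
qed

lemma emb_trancl:
  assumes "rooted_tree V2 E2 r2" "rooted_tree V E r" "emb V2 E2 V E f" "x \<in> V2" "y \<in> V2" "(x, y) \<in> E2\<^sup>+"
  shows "(f x, f y) \<in> E\<^sup>+"
proof -
  have "x \<noteq> y" using assms(6) acyclic_rt[OF assms(1)] by auto
  hence "f x \<noteq> f y" using assms(3,4,5) unfolding emb_def inj_on_def by auto
  moreover have "(f x, f y) \<in> E\<^sup>*" using emb_anc[OF assms(1-5) trancl_into_rtrancl[OF assms(6)]] .
  ultimately show ?thesis by (meson rtranclD)
qed

lemma emb_degree:
  assumes "rooted_tree V2 E2 r2" "rooted_tree V E r" "emb V2 E2 V E f" "w \<in> V2"
  shows "degree E2 w \<le> degree E (f w)"
proof -
  have EV2: "E2 \<subseteq> V2 \<times> V2" using rt_E[OF assms(1)] .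
  define g where "g c = (SOME y. (f w, y) \<in> E \<and> (y, f c) \<in> E\<^sup>*)" for c
  have fcV: "c \<in> V2 \<Longrightarrow> f c \<in> V" for c using assms(3) unfolding emb_def by auto
  have g: "(f w, g c) \<in> E \<and> (g c, f c) \<in> E\<^sup>*" if c: "c \<in> children E2 w" for c
  proof -
    have wc: "(w, c) \<in> E2" using c unfolding children_def by auto
    hence cV: "c \<in> V2" using EV2 by auto
    have "(f w, f c) \<in> E\<^sup>+" using emb_trancl[OF assms(1-4) cV] wc by auto
    hence "\<exists>y. (f w, y) \<in> E \<and> (y, f c) \<in> E\<^sup>*" using tranclD by metis
    thus ?thesis unfolding g_def by (rule someI_ex)
  qed
  have "inj_on g (children E2 w)"
  proof (rule inj_onI, rule ccontr)
    fix c1 c2 assume c1: "c1 \<in> children E2 w" and c2: "c2 \<in> children E2 w" and eq: "g c1 = g c2"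
      and ne: "c1 \<noteq> c2"
    have wc1: "(w, c1) \<in> E2" and wc2: "(w, c2) \<in> E2" using c1 c2 unfolding children_def by auto
    hence c1V: "c1 \<in> V2" and c2V: "c2 \<in> V2" using EV2 by auto
    have "is_nca E2 c1 c2 w"
      unfolding is_nca_def
    proof (intro conjI allI impI)
      show "(w, c1) \<in> E2\<^sup>*" "(w, c2) \<in> E2\<^sup>*" using wc1 wc2 by auto
      fix w' assume h: "(w', c1) \<in> E2\<^sup>* \<and> (w', c2) \<in> E2\<^sup>*"
      from anc_parent[OF assms(1) _ wc1] h have "w' = c1 \<or> (w', w) \<in> E2\<^sup>*" by auto
      thus "(w', w) \<in> E2\<^sup>*"
      proof
        assume "w' = c1"
        hence "(c1, c2) \<in> E2\<^sup>*" using h by auto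
        from anc_parent[OF assms(1) this wc2] ne have "(c1, w) \<in> E2\<^sup>*" by auto
        hence "(w, w) \<in> E2\<^sup>+" using wc1 by (meson rtrancl_into_trancl2)
        thus ?thesis using acyclic_rt[OF assms(1)] by auto
      qed
    qed
    hence "nca E2 c1 c2 = w" using nca_unique[OF assms(1)] by auto
    hence fw: "f w = nca E (f c1) (f c2)" using assms(3) c1V c2V unfolding emb_def by metis
    have "is_nca E (f c1) (f c2) (f w)" using nca_exists[OF assms(2) fcV[OF c1V] fcV[OF c2V]] fw by simp
    moreover have "(g c1, f c1) \<in> E\<^sup>*" "(g c1, f c2) \<in> E\<^sup>*" using g[OF c1] g[OF c2] eq by auto
    ultimately have "(g c1, f w) \<in> E\<^sup>*" unfolding is_nca_def by blast
    hence "(f w, f w) \<in> E\<^sup>+" using g[OF c1] by (meson rtrancl_into_trancl2)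
    thus False using acyclic_rt[OF assms(2)] by auto
  qed
  moreover have "g ` children E2 w \<subseteq> children E (f w)" using g unfolding children_def by auto
  ultimately show ?thesis unfolding degree_def using card_inj_on_le children_fin[OF assms(2)] by metis
qed

lemma emb_chain:
  assumes "rooted_tree V2 E2 r2" "rooted_tree V E r" "emb V2 E2 V E f" "l \<in> V2" "d \<ge> 1"
    "chainP E2 d j l"
  shows "chainP E d j (f l)"
proof -
  obtain cs where cs: "length cs = j" "\<forall>c\<in>set cs. d \<le> degree E2 c"
      "sorted_wrt (\<lambda>a b. (a, b) \<in> E2\<^sup>+) cs" "cs \<noteq> [] \<longrightarrow> (l, hd cs) \<in> E2\<^sup>*"
    using assms(6) unfolding chainP_def by blast
  have inV: "c \<in> V2" if "c \<in> set cs" for c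
  proof -
    have "children E2 c \<noteq> {}" using cs(2) that assms(5) unfolding degree_def by fastforce
    thus ?thesis using rt_E[OF assms(1)] unfolding children_def by auto
  qed
  have "length (map f cs) = j" using cs(1) by simp
  moreover have "\<forall>c\<in>set (map f cs). d \<le> degree E c"
    using cs(2) inV emb_degree[OF assms(1-3)] le_trans by fastforce
  moreover have "sorted_wrt (\<lambda>a b. (a, b) \<in> E\<^sup>+) (map f cs)"
    by (rule sorted_wrt_map_mono[OF cs(3)]) (use emb_trancl[OF assms(1-3)] inV in auto)
  moreover have "map f cs \<noteq> [] \<longrightarrow> (f l, hd (map f cs)) \<in> E\<^sup>*"
  proof
    assume "map f cs \<noteq> []"
    hence ne: "cs \<noteq> []" by auto
    hence "hd cs \<in> V2" using inV by auto
    thus "(f l, hd (map f cs)) \<in> E\<^sup>*" using emb_anc[OF assms(1-4)] cs(4) ne by (simp add: hd_map)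
  qed
  ultimately show ?thesis unfolding chainP_def by blast
qed

definition Pset :: "nat set \<Rightarrow> (nat \<times> nat) set \<Rightarrow> nat \<Rightarrow> nat \<Rightarrow> nat set" where
  "Pset V E d j = {v \<in> V. chainP E d j v}"

lemma Pset_up:
  assumes "rooted_tree V E r" "(a, b) \<in> E\<^sup>*" "b \<in> Pset V E d j"
  shows "a \<in> Pset V E d j"
proof -
  have "a \<in> V" using anc_in_V[OF rt_E[OF assms(1)] assms(2)] assms(3) unfolding Pset_def by auto
  moreover obtain cs where cs: "length cs = j" "\<forall>c\<in>set cs. d \<le> degree E c"
      "sorted_wrt (\<lambda>a b. (a, b) \<in> E\<^sup>+) cs" "cs \<noteq> [] \<longrightarrow> (b, hd cs) \<in> E\<^sup>*"
    using assms(3) unfolding chainP_def Pset_def by blast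
  moreover have "cs \<noteq> [] \<longrightarrow> (a, hd cs) \<in> E\<^sup>*" using cs(4) assms(2) by auto
  ultimately show ?thesis unfolding Pset_def chainP_def by blast
qed

lemma Pset_anti:
  assumes "i \<le> j"
  shows "Pset V E d j \<subseteq> Pset V E d i"
proof
  fix v assume "v \<in> Pset V E d j"
  then obtain cs where v: "v \<in> V" and cs: "length cs = j" "\<forall>c\<in>set cs. d \<le> degree E c"
      "sorted_wrt (\<lambda>a b. (a, b) \<in> E\<^sup>+) cs" "cs \<noteq> [] \<longrightarrow> (v, hd cs) \<in> E\<^sup>*"
    unfolding chainP_def Pset_def by blast
  have "length (take i cs) = i" using cs(1) assms by simp
  moreover have "\<forall>c\<in>set (take i cs). d \<le> degree E c" using cs(2) by (meson in_set_takeD)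
  moreover have "sorted_wrt (\<lambda>a b. (a, b) \<in> E\<^sup>+) (take i cs)" using cs(3) by (rule sorted_wrt_take)
  moreover have "take i cs \<noteq> [] \<longrightarrow> (v, hd (take i cs)) \<in> E\<^sup>*" using cs(4) by auto
  ultimately show "v \<in> Pset V E d i" using v unfolding Pset_def chainP_def by blast
qed

lemma sub_tree:
  assumes "rooted_tree V E r" "W \<subseteq> V" "\<forall>a b. (a, b) \<in> E\<^sup>* \<longrightarrow> b \<in> W \<longrightarrow> a \<in> W" "W \<noteq> {}"
  shows "rooted_tree W (E \<inter> W \<times> W) r" "tree_ext W (E \<inter> W \<times> W) V E"
proof -
  have EV: "E \<subseteq> V \<times> V" using rt_E[OF assms(1)] .
  obtain w where "w \<in> W" using assms(4) by auto
  hence "(r, w) \<in> E\<^sup>*" using assms(2) rt_reach[OF assms(1)] by auto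
  hence rW: "r \<in> W" using assms(3)[rule_format, of r w] \<open>w \<in> W\<close> by auto
  show "rooted_tree W (E \<inter> W \<times> W) r"
    unfolding rooted_tree_def
  proof (intro conjI ballI)
    show "finite W" using assms(2) rt_fin[OF assms(1)] finite_subset by auto
    show "r \<in> W" by fact
    show "E \<inter> W \<times> W \<subseteq> W \<times> W" by auto
    show "\<nexists>p. (p, r) \<in> E \<inter> W \<times> W" using rt_noparent[OF assms(1)] by auto
  next
    fix v assume v: "v \<in> W - {r}"
    have "(r, v) \<in> E\<^sup>*" using rt_reach[OF assms(1)] v assms(2) by auto
    moreover have "v \<noteq> r" using v by auto
    ultimately have "(r, v) \<in> E\<^sup>+" by (auto simp: rtrancl_eq_or_trancl)
    then obtain p where p1: "(p, v) \<in> E" using tranclD2 by metis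
    have p2: "\<And>q. (q, v) \<in> E \<Longrightarrow> q = p" using parent_unique[OF assms(1) _ p1] .
    have "(p, v) \<in> E\<^sup>*" using p1 by auto
    hence pW: "p \<in> W" using assms(3)[rule_format, of p v] v by auto
    show "\<exists>!p. (p, v) \<in> E \<inter> W \<times> W"
    proof (rule ex1I[of _ p])
      show "(p, v) \<in> E \<inter> W \<times> W" using p1 pW v by auto
      fix q assume "(q, v) \<in> E \<inter> W \<times> W"
      thus "q = p" using p2[of q] by auto
    qed
  next
    fix v assume v: "v \<in> W"
    have "(r, v) \<in> E\<^sup>*" using rt_reach[OF assms(1)] v assms(2) by auto
    have "v \<in> W \<longrightarrow> (r, v) \<in> (E \<inter> W \<times> W)\<^sup>*" using \<open>(r, v) \<in> E\<^sup>*\<close>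
    proof (induction rule: rtrancl_induct)
      case (step y z)
      show ?case
      proof
        assume z: "z \<in> W"
        have "(y, z) \<in> E\<^sup>*" using step(2) by auto
        hence "y \<in> W" using assms(3)[rule_format, of y z] z by auto
        hence "(y, z) \<in> E \<inter> W \<times> W" using z step(2) by auto
        thus "(r, z) \<in> (E \<inter> W \<times> W)\<^sup>*" using step(3) \<open>y \<in> W\<close> by (meson rtrancl.rtrancl_into_rtrancl)
      qed
    qed auto
    thus "(r, v) \<in> (E \<inter> W \<times> W)\<^sup>*" using v by auto
  qed
  show "tree_ext W (E \<inter> W \<times> W) V E"
    unfolding tree_ext_def
  proof (intro conjI allI impI)
    fix a b assume "(a, b) \<in> E" "b \<in> W"
    moreover have "(a, b) \<in> E\<^sup>*" using \<open>(a, b) \<in> E\<close> by auto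
    ultimately show "(a, b) \<in> E \<inter> W \<times> W" using assms(3)[rule_format, of a b] by auto
  qed (use assms(2) in auto)
qed

lemma Ts_leaves:
  assumes "rooted_tree V E r" "j \<ge> 1" "d \<ge> 1"
    "v \<in> leaves (Pset V E d j) (E \<inter> Pset V E d j \<times> Pset V E d j)"
  shows "d \<le> degree E v \<and> v \<notin> Pset V E d (Suc j)"
proof -
  let ?W = "Pset V E d j"
  have EV: "E \<subseteq> V \<times> V" using rt_E[OF assms(1)] .
  have vW: "v \<in> ?W" and nc: "\<And>c. (v, c) \<in> E \<Longrightarrow> c \<notin> ?W"
    using assms(4) unfolding leaves_def children_def by auto
  have key: False if vb: "(v, b) \<in> E\<^sup>+" and cs: "length cs = j" "\<forall>c\<in>set cs. d \<le> degree E c"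
      "sorted_wrt (\<lambda>a b. (a, b) \<in> E\<^sup>+) cs" "cs \<noteq> []" "b = hd cs" for b cs
  proof -
    obtain c where c: "(v, c) \<in> E" "(c, b) \<in> E\<^sup>*" using tranclD[OF vb] by blast
    have "c \<in> V" using c(1) EV by auto
    moreover have "chainP E d j c" unfolding chainP_def using cs c(2) by blast
    ultimately have "c \<in> ?W" unfolding Pset_def by auto
    thus False using nc c(1) by auto
  qed
  obtain cs where cs: "length cs = j" "\<forall>c\<in>set cs. d \<le> degree E c"
      "sorted_wrt (\<lambda>a b. (a, b) \<in> E\<^sup>+) cs" "cs \<noteq> [] \<longrightarrow> (v, hd cs) \<in> E\<^sup>*"
    using vW unfolding Pset_def chainP_def by blast
  have ne: "cs \<noteq> []" using cs(1) assms(2) by auto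
  have "v = hd cs"
  proof (rule ccontr)
    assume "v \<noteq> hd cs"
    hence "(v, hd cs) \<in> E\<^sup>+" using cs(4) ne by (auto simp: rtrancl_eq_or_trancl)
    thus False using key cs ne by blast
  qed
  hence deg: "d \<le> degree E v" using cs(2) ne by auto
  have "v \<notin> Pset V E d (Suc j)"
  proof
    assume "v \<in> Pset V E d (Suc j)"
    then obtain bs where bs: "length bs = Suc j" "\<forall>c\<in>set bs. d \<le> degree E c"
      "sorted_wrt (\<lambda>a b. (a, b) \<in> E\<^sup>+) bs" "bs \<noteq> [] \<longrightarrow> (v, hd bs) \<in> E\<^sup>*"
      unfolding Pset_def chainP_def by blast
    obtain b0 b1 rest where bsd: "bs = b0 # b1 # rest"
      using bs(1) assms(2) by (cases bs; cases "tl bs") auto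
    have "(b0, b1) \<in> E\<^sup>+" using bs(3) bsd by auto
    moreover have "(v, b0) \<in> E\<^sup>*" using bs(4) bsd by auto
    ultimately have "(v, b1) \<in> E\<^sup>+" by (meson rtrancl_trancl_trancl)
    moreover have "length (b1 # rest) = j" using bs(1) bsd by auto
    moreover have "\<forall>c\<in>set (b1 # rest). d \<le> degree E c" using bs(2) bsd by auto
    moreover have "sorted_wrt (\<lambda>a b. (a, b) \<in> E\<^sup>+) (b1 # rest)" using bs(3) bsd by auto
    ultimately show False using key[of b1 "b1 # rest"] by auto
  qed
  thus ?thesis using deg by auto
qed

lemma univ_s:
  assumes "universal n V E r" "d \<ge> 2" "j \<ge> 1" "j * (d - 1) + 1 \<le> n"
  shows "universal (n div (j * (d - 1) + 1)) (Pset V E d j)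
            (E \<inter> Pset V E d j \<times> Pset V E d j) r"
proof -
  define k where "k = j * (d - 1) + 1"
  define m where "m = n div k"
  define W where "W = Pset V E d j"
  have rt: "rooted_tree V E r" using assms(1) unfolding universal_def by auto
  have EV: "E \<subseteq> V \<times> V" using rt_E[OF rt] .
  have kpos: "k > 0" unfolding k_def by auto
  have m1: "m \<ge> 1"
  proof -
    have "k div k \<le> n div k" using assms(4) unfolding k_def by (intro div_le_mono) auto
    thus ?thesis using kpos unfolding m_def by auto
  qed
  have mk: "m * k \<le> n" unfolding m_def using div_mult_mod_eq[of n k] by linarith
  obtain j' where j': "j = Suc j'" using assms(3) by (cases j) auto
  have claim: "\<exists>f. emb V' E' V E f \<and> f ` V' \<subseteq> W"
    if T': "rooted_tree V' E' r'" "card (leaves V' E') = m" "\<forall>v\<in>V'. degree E' v \<noteq> 1" for V' E' r'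
  proof -
    have "m * (Suc j' * (d - 1) + 1) \<le> n" using mk j' unfolding k_def by simp
    then obtain V2 E2 where G: "rooted_tree V2 E2 r'" "tree_ext V' E' V2 E2" "card (leaves V2 E2) = n"
       "\<forall>v\<in>V2. degree E2 v \<noteq> 1" "\<forall>x\<in>leaves V' E'. chainP E2 d (Suc j') x"
      using grow_full[OF T'(1) T'(3) T'(2) assms(2)] by blast
    have U: "\<forall>V' E' r'. rooted_tree V' E' r' \<and> card (leaves V' E') = n \<and>
        (\<forall>v\<in>V'. degree E' v \<noteq> 1) \<longrightarrow> top_minor V' E' V E"
      using assms(1) unfolding universal_def by simp
    have "top_minor V2 E2 V E" using U[rule_format, of V2 E2 r'] G(1,3,4) by simp
    then obtain f where "inj_on f V2" "f ` V2 \<subseteq> V" "\<forall>x\<in>V2. \<forall>y\<in>V2. f (nca E2 x y) = nca E (f x) (f y)"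
      unfolding top_minor_def by blast
    hence f: "emb V2 E2 V E f" unfolding emb_def by simp
    have VV2: "V' \<subseteq> V2" and EE2: "E' \<subseteq> E2" using G(2) unfolding tree_ext_def by auto
    have E'V: "E' \<subseteq> V' \<times> V'" using rt_E[OF T'(1)] .
    have "emb V' E' V E f" unfolding emb_def
    proof (intro conjI ballI)
      show "inj_on f V'" using inj_on_subset[of f V2 V'] f VV2 unfolding emb_def by simp
      show "f ` V' \<subseteq> V" using f VV2 unfolding emb_def by auto
      fix x y assume x: "x \<in> V'" and y: "y \<in> V'"
      have "nca E2 x y = nca E' x y" using ext_nca[OF G(2) E'V x y] .
      moreover have "f (nca E2 x y) = nca E (f x) (f y)" using f x y VV2 unfolding emb_def by auto
      ultimately show "f (nca E' x y) = nca E (f x) (f y)" by simp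
    qed
    moreover have "f ` V' \<subseteq> W"
    proof
      fix z assume "z \<in> f ` V'"
      then obtain x where x: "x \<in> V'" "z = f x" by auto
      obtain l where l: "l \<in> leaves V' E'" "(x, l) \<in> E'\<^sup>*" using leaf_below[OF T'(1) x(1)] by blast
      have lV2: "l \<in> V2" using l(1) leaves_sub VV2 by auto
      have "chainP E2 d (Suc j') l" using G(5) l(1) by auto
      hence "chainP E d j (f l)" using emb_chain[OF G(1) rt f lV2, of d "Suc j'"] assms(2) j' by simp
      moreover have "f l \<in> V" using f lV2 unfolding emb_def by auto
      ultimately have flW: "f l \<in> W" unfolding W_def Pset_def by auto
      have "(x, l) \<in> E2\<^sup>*" using l(2) rtrancl_mono[OF EE2] by auto
      hence "(f x, f l) \<in> E\<^sup>*" using emb_anc[OF G(1) rt f] x(1) lV2 VV2 by auto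
      thus "z \<in> W" using Pset_up[OF rt _ flW[unfolded W_def]] x(2) unfolding W_def by auto
    qed
    ultimately show ?thesis by blast
  qed
  have WV: "W \<subseteq> V" unfolding W_def Pset_def by auto
  have up: "\<forall>a b. (a, b) \<in> E\<^sup>* \<longrightarrow> b \<in> W \<longrightarrow> a \<in> W"
  proof (intro allI impI)
    fix a b assume "(a, b) \<in> E\<^sup>*" "b \<in> W"
    thus "a \<in> W" using Pset_up[OF rt, of a b d j] unfolding W_def by simp
  qed
  have Wne: "W \<noteq> {}"
  proof -
    obtain V' E' r' where T': "rooted_tree V' E' r'" "card (leaves V' E') = m" "\<forall>v\<in>V'. degree E' v \<noteq> 1"
      using exists_tree[OF m1] by blast
    obtain f where "f ` V' \<subseteq> W" using claim[OF T'] by blast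
    thus ?thesis using rt_r[OF T'(1)] by auto
  qed
  have rW: "rooted_tree W (E \<inter> W \<times> W) r" and eW: "tree_ext W (E \<inter> W \<times> W) V E"
    using sub_tree[OF rt WV up Wne] by auto
  have "universal m W (E \<inter> W \<times> W) r"
    unfolding universal_def
  proof (intro conjI allI impI)
    show "rooted_tree W (E \<inter> W \<times> W) r" by fact
    fix V' E' r' assume h: "rooted_tree V' E' r' \<and> card (leaves V' E') = m \<and> (\<forall>v\<in>V'. degree E' v \<noteq> 1)"
    then obtain f where f: "emb V' E' V E f" "f ` V' \<subseteq> W" using claim[of V' E' r'] by auto
    show "top_minor V' E' W (E \<inter> W \<times> W)"
      unfolding top_minor_def
    proof (rule exI[of _ f], intro conjI ballI)
      show "inj_on f V'" using f(1) unfolding emb_def by auto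
      show "f ` V' \<subseteq> W" by fact
      fix x y assume x: "x \<in> V'" and y: "y \<in> V'"
      have "f x \<in> W" "f y \<in> W" using f(2) x y by auto
      hence "nca (E \<inter> W \<times> W) (f x) (f y) = nca E (f x) (f y)"
        using ext_nca[OF eW _ ] by auto
      thus "f (nca E' x y) = nca (E \<inter> W \<times> W) (f x) (f y)" using f(1) x y unfolding emb_def by auto
    qed
  qed
  thus ?thesis unfolding m_def k_def W_def .
qed

theorem lemma6:
  fixes n d :: nat and V :: "nat set" and E :: "(nat \<times> nat) set" and r :: nat
  assumes "n \<ge> 1" and "d \<ge> 2"
    and "universal n V E r"
  shows "card {v \<in> V. degree E v \<ge> d} \<ge>
           (\<Sum>s\<in>{s. s \<ge> 2 \<and> (s - 1) * (d - 1) + 1 \<le> n}. u (n div ((s - 1) * (d - 1) + 1)))"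
proof -
  define I where "I = {s. s \<ge> 2 \<and> (s - 1) * (d - 1) + 1 \<le> n}"
  define W where "W s = Pset V E d (s - 1)" for s
  define L where "L s = leaves (W s) (E \<inter> W s \<times> W s)" for s
  define D where "D = {v \<in> V. degree E v \<ge> d}"
  have rt: "rooted_tree V E r" using assms(3) unfolding universal_def by auto
  have finI: "finite I"
  proof -
    have "I \<subseteq> {..n+1}"
    proof
      fix s assume "s \<in> I"
      hence h: "s \<ge> 2" "(s - 1) * (d - 1) + 1 \<le> n" unfolding I_def by auto
      have a: "s - 1 \<le> (s - 1) * (d - 1)" 
      proof -
        have "1 \<le> d - 1" using assms(2) by simp
        hence "(s - 1) * 1 \<le> (s - 1) * (d - 1)" by (rule mult_le_mono2)
        thus ?thesis by simp
      qed
      have "s \<le> n + 1" using h(2) a by linarith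
      thus "s \<in> {..n+1}" by simp
    qed
    thus ?thesis using finite_subset by blast
  qed
  have finD: "finite D" using rt_fin[OF rt] unfolding D_def by auto
  have LD: "L s \<subseteq> D" if "s \<in> I" for s
  proof
    fix v assume v: "v \<in> L s"
    have "s - 1 \<ge> 1" using that unfolding I_def by auto
    hence "d \<le> degree E v" using Ts_leaves[OF rt _ _ v[unfolded L_def W_def]] assms(2) by auto
    moreover have "v \<in> V" using v leaves_sub unfolding L_def W_def Pset_def by blast
    ultimately show "v \<in> D" unfolding D_def by auto
  qed
  have Lout: "L s \<inter> Pset V E d s = {}" if "s \<in> I" for s
  proof -
    have "s - 1 \<ge> 1" "Suc (s - 1) = s" using that unfolding I_def by auto
    thus ?thesis using Ts_leaves[OF rt, of "s - 1" d] assms(2) unfolding L_def W_def by auto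
  qed
  have LW: "L s \<subseteq> W s" for s unfolding L_def using leaves_sub by auto
  have disj: "L s \<inter> L t = {}" if "s \<in> I" "t \<in> I" "s < t" for s t
  proof -
    have "W t \<subseteq> Pset V E d s" unfolding W_def using that(3) by (intro Pset_anti) auto
    thus ?thesis using LW[of t] Lout[OF that(1)] by auto
  qed
  have ule: "u (n div ((s - 1) * (d - 1) + 1)) \<le> card (L s)" if "s \<in> I" for s
  proof -
    have "universal (n div ((s - 1) * (d - 1) + 1)) (W s) (E \<inter> W s \<times> W s) r"
      unfolding W_def using univ_s[OF assms(3) assms(2), of "s - 1"] that unfolding I_def by auto
    thus ?thesis unfolding u_def L_def by (intro Least_le) blast
  qed
  have "(\<Sum>s\<in>I. u (n div ((s - 1) * (d - 1) + 1))) \<le> (\<Sum>s\<in>I. card (L s))"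
    using ule by (intro sum_mono) auto
  also have "\<dots> = card (\<Union>s\<in>I. L s)"
  proof (rule card_UN_disjoint[symmetric])
    show "finite I" by fact
    show "\<forall>s\<in>I. finite (L s)" using LD finD finite_subset by blast
    show "\<forall>s\<in>I. \<forall>t\<in>I. s \<noteq> t \<longrightarrow> L s \<inter> L t = {}"
      using disj by (metis Int_commute linorder_neqE_nat)
  qed
  also have "\<dots> \<le> card D" using LD finD by (intro card_mono) auto
  finally show ?thesis unfolding I_def D_def .
qed

end
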